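(* Let $X_1,X_2$ be infinite dimensional Hilbert spaces, $D_1\in\mathcal{B}(X_1)$, $D_2\in\mathcal{B}(X_2)$. Then for every $C\in\mathcal{B}(X_2,X_1)$, writing $M_C=\begin{bmatrix}D_1&C\\0&D_2\end{bmatrix}\in\mathcal{B}(X_1\oplus X_2)$, $$\sigma(D_1)\cup\sigma(D_2)=\sigma(M_C)\cup\big\{\lambda\in\mathbb{C}:\ 0<\beta(D_1-\lambda)\le\alpha(D_2-\lambda)\ \text{or}\ 0<\alpha(D_2-\lambda)\le\beta(D_1-\lambda)\big\}.$$ In particular, if the set $\{\lambda:\ 0<\beta(D_1-\lambda)\le\alpha(D_2-\lambda)$ or $0<\alpha(D_2-\lambda)\le\beta(D_1-\lambda)\}$ is empty, then $\sigma(D_1)\cup\sigma(D_2)=\sigma(M_C)$ for every $C$.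
   Context: For a bounded operator $T$, $\alpha(T)=\dim\mathcal{N}(T)$, $\beta(T)=\operatorname{codim}\mathcal{R}(T)$, values in $\{0,1,\dots\}\cup\{\infty\}$ (comparisons in this extended set). $\sigma(T)$ is the set of $\lambda\in\mathbb{C}$ such that $\lambda-T$ is not invertible. *)

theory Defs
  imports "HOL-Analysis.Analysis" "HOL-Library.Extended_Nat"
begin

text \<open>The distribution has no complex vector spaces, so we introduce them as a type class
  over real vector spaces (the real scalar multiplication being the restriction of the
  complex one).\<close>

class complex_vector = real_vector +
  fixes scaleC :: "complex \<Rightarrow> 'a \<Rightarrow> 'a" (infixr "*\<^sub>C" 75)
  assumes scaleC_add_right: "scaleC a (x + y) = scaleC a x + scaleC a y"
    and scaleC_add_left: "scaleC (a + b) x = scaleC a x + scaleC b x"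
    and scaleC_scaleC: "scaleC a (scaleC b x) = scaleC (a * b) x"
    and scaleC_one: "scaleC 1 x = x"
    and scaleR_scaleC: "scaleR r x = scaleC (complex_of_real r) x"

class chilbert_space = complex_vector + banach +
  fixes cinner :: "'a \<Rightarrow> 'a \<Rightarrow> complex"
  assumes cinner_add_left: "cinner (x + y) z = cinner x z + cinner y z"
    and cinner_scaleC_left: "cinner (scaleC c x) y = cnj c * cinner x y"
    and cinner_commute: "cinner x y = cnj (cinner y x)"
    and cinner_ge_zero: "0 \<le> Re (cinner x x)"
    and cinner_eq_zero_iff: "cinner x x = 0 \<longleftrightarrow> x = 0"
    and norm_eq_sqrt_cinner: "norm x = sqrt (Re (cinner x x))"

text \<open>The direct sum X1 \<oplus> X2 is the product type (with HOL's product norm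
  sqrt(norm x^2 + norm y^2), i.e. the Hilbert direct sum norm).\<close>

instantiation prod :: (complex_vector, complex_vector) complex_vector
begin
definition scaleC_prod_def: "scaleC c p = (scaleC c (fst p), scaleC c (snd p))"
instance
  by standard (auto simp: scaleC_prod_def scaleC_add_right scaleC_add_left scaleC_scaleC
      scaleC_one scaleR_prod_def scaleR_scaleC)
end

definition clinear :: "('a::complex_vector \<Rightarrow> 'b::complex_vector) \<Rightarrow> bool" where
  "clinear f \<longleftrightarrow> (\<forall>x y. f (x + y) = f x + f y) \<and> (\<forall>c x. f (scaleC c x) = scaleC c (f x))"

definition bounded_clinear ::
  "('a::{complex_vector,real_normed_vector} \<Rightarrow> 'b::{complex_vector,real_normed_vector}) \<Rightarrow> bool" where
  "bounded_clinear f \<longleftrightarrow> clinear f \<and> (\<exists>K. \<forall>x. norm (f x) \<le> norm x * K)"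

definition invertible_op :: "('a::{complex_vector,real_normed_vector} \<Rightarrow> 'a) \<Rightarrow> bool" where
  "invertible_op T \<longleftrightarrow> bounded_clinear T \<and>
     (\<exists>S. bounded_clinear S \<and> S \<circ> T = id \<and> T \<circ> S = id)"

definition spectrum :: "('a::{complex_vector,real_normed_vector} \<Rightarrow> 'a) \<Rightarrow> complex set" where
  "spectrum T = {l. \<not> invertible_op (\<lambda>x. scaleC l x - T x)}"

text \<open>A finite set S is linearly independent modulo W if no nontrivial complex linear
  combination of S lies in W (i.e. its image in the quotient by W is independent).\<close>
definition indep_mod :: "'a::complex_vector set \<Rightarrow> 'a set \<Rightarrow> bool" where
  "indep_mod W S \<longleftrightarrow> finite S \<and>
     (\<forall>u. (\<Sum>x\<in>S. scaleC (u x) x) \<in> W \<longrightarrow> (\<forall>x\<in>S. u x = 0))"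

text \<open>dim_mod W V: dimension of (V + W)/W, in {0,1,...} \<union> {\<infinity>}.
  dim V = dim_mod {0} V and codim W = dim_mod W UNIV.\<close>
definition dim_mod :: "'a::complex_vector set \<Rightarrow> 'a set \<Rightarrow> enat" where
  "dim_mod W V = Sup {enat (card S) | S. S \<subseteq> V \<and> indep_mod W S}"

definition cdim :: "'a::complex_vector set \<Rightarrow> enat" where
  "cdim V = dim_mod {0} V"

definition codim :: "'a::complex_vector set \<Rightarrow> enat" where
  "codim W = dim_mod W UNIV"

definition nullity :: "('a::complex_vector \<Rightarrow> 'b::complex_vector) \<Rightarrow> enat" where
  "nullity T = cdim {x. T x = 0}"

definition defect :: "('a::complex_vector \<Rightarrow> 'b::complex_vector) \<Rightarrow> enat" where
  "defect T = codim (range T)"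

definition upper_tri :: "('a \<Rightarrow> 'a) \<Rightarrow> ('b \<Rightarrow> 'a) \<Rightarrow> ('b \<Rightarrow> 'b) \<Rightarrow> ('a::plus \<times> 'b \<Rightarrow> 'a \<times> 'b)" where
  "upper_tri D1 C D2 = (\<lambda>(x, y). (D1 x + C y, D2 y))"

end

theory Submission
  imports Defs
begin

lemma scaleC_zero_left[simp]: "(0::complex) *\<^sub>C (x::'a::complex_vector) = 0"
  by (metis scaleR_scaleC of_real_0 scaleR_zero_left)

lemma scaleC_zero_right[simp]: "c *\<^sub>C (0::'a::complex_vector) = 0"
  by (metis add_cancel_right_right scaleC_add_right add_0)

lemma scaleC_minus_right: "c *\<^sub>C (- x::'a::complex_vector) = - (c *\<^sub>C x)"
  by (metis add.right_inverse scaleC_add_right scaleC_zero_right eq_neg_iff_add_eq_0)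

lemma scaleC_diff_right: "c *\<^sub>C (x - y::'a::complex_vector) = c *\<^sub>C x - c *\<^sub>C y"
  by (simp only: diff_conv_add_uminus scaleC_add_right scaleC_minus_right)

lemma scaleC_sum_right: "c *\<^sub>C sum f S = (\<Sum>x\<in>S. c *\<^sub>C (f x::'a::complex_vector))"
  by (induction S rule: infinite_finite_induct) (auto simp: scaleC_add_right)

lemma scaleC_comm: "a *\<^sub>C (b *\<^sub>C (x::'a::complex_vector)) = b *\<^sub>C (a *\<^sub>C x)"
  by (simp add: scaleC_scaleC mult.commute)

lemma clinear_0: "clinear f \<Longrightarrow> f 0 = 0"
  unfolding clinear_def by (metis add_cancel_right_right add_0)

lemma clinear_minus: "clinear f \<Longrightarrow> f (- x) = - f x"
  unfolding clinear_def by (metis add.right_inverse clinear_0[unfolded clinear_def] eq_neg_iff_add_eq_0)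

lemma clinear_diff: "clinear f \<Longrightarrow> f (x - y) = f x - f y"
  using clinear_minus[of f y] unfolding clinear_def by (metis diff_conv_add_uminus)

lemma clinear_add: "clinear f \<Longrightarrow> f (x + y) = f x + f y"
  unfolding clinear_def by blast

lemma clinear_scale: "clinear f \<Longrightarrow> f (c *\<^sub>C x) = c *\<^sub>C f x"
  unfolding clinear_def by blast

lemma clinear_sum: "clinear f \<Longrightarrow> f (sum g S) = (\<Sum>x\<in>S. f (g x))"
  by (induction S rule: infinite_finite_induct) (auto simp: clinear_0 clinear_add)

lemma clinear_linear: "clinear f \<Longrightarrow> linear f"
  by (rule linearI) (auto simp: clinear_add scaleR_scaleC clinear_scale)

lemma bounded_clinear_iff: "bounded_clinear f \<longleftrightarrow> clinear f \<and> bounded_linear f"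
proof
  assume "bounded_clinear f"
  then obtain K where "clinear f" "\<forall>x. norm (f x) \<le> norm x * K" unfolding bounded_clinear_def by blast
  then show "clinear f \<and> bounded_linear f"
    by (auto intro!: bounded_linear_intro[where K=K] simp: clinear_add clinear_scale scaleR_scaleC)
next
  assume "clinear f \<and> bounded_linear f"
  then show "bounded_clinear f" unfolding bounded_clinear_def
    using bounded_linear.bounded by blast
qed

lemma norm_scaleC: "norm (c *\<^sub>C (x::'a::chilbert_space)) = cmod c * norm x"
proof -
  have r: "cnj (cinner x x) = cinner x x" by (metis cinner_commute)
  have "cinner (c *\<^sub>C x) (c *\<^sub>C x) = cnj c * cnj (cinner (c *\<^sub>C x) x)"
    by (metis cinner_scaleC_left cinner_commute)
  also have "\<dots> = cnj c * c * cinner x x" by (simp add: cinner_scaleC_left r)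
  also have "\<dots> = of_real ((cmod c)^2) * cinner x x"
    using complex_norm_square[of c] by (simp only: mult.commute)
  finally have "Re (cinner (c *\<^sub>C x) (c *\<^sub>C x)) = (cmod c)^2 * Re (cinner x x)" by simp
  then have "norm (c *\<^sub>C x) = sqrt ((cmod c)^2 * Re (cinner x x))"
    by (simp only: norm_eq_sqrt_cinner)
  also have "\<dots> = cmod c * sqrt (Re (cinner x x))"
    by (simp only: real_sqrt_mult real_sqrt_abs abs_norm_cancel)
  also have "\<dots> = cmod c * norm x" by (simp only: norm_eq_sqrt_cinner)
  finally show ?thesis .
qed

lemma bc_scaleC: "bounded_clinear (\<lambda>x::'a::chilbert_space. c *\<^sub>C x)"
  unfolding bounded_clinear_def clinear_def
proof (intro conjI allI exI)
  fix x y :: 'a show "c *\<^sub>C (x + y) = c *\<^sub>C x + c *\<^sub>C y" by (rule scaleC_add_right)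
next
  fix d x show "c *\<^sub>C (d *\<^sub>C (x::'a)) = d *\<^sub>C (c *\<^sub>C x)" by (rule scaleC_comm)
next
  fix x :: 'a show "norm (c *\<^sub>C x) \<le> norm x * cmod c" by (simp only: norm_scaleC mult.commute order_refl)
qed

lemma scaleC_minus_left: "(- c) *\<^sub>C (x::'a::complex_vector) = - (c *\<^sub>C x)"
  by (metis add.right_inverse scaleC_add_left scaleC_zero_left eq_neg_iff_add_eq_0)

lemma bc_clinear: "bounded_clinear f \<Longrightarrow> clinear f"
  unfolding bounded_clinear_def by blast

lemma bc_comp:
  assumes "bounded_clinear f" "bounded_clinear g"
  shows "bounded_clinear (\<lambda>x. f (g x))"
proof -
  have "clinear f" "clinear g" "bounded_linear f" "bounded_linear g"
    using assms bounded_clinear_iff by blast+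
  moreover have "clinear (\<lambda>x. f (g x))"
    using calculation unfolding clinear_def by simp
  ultimately show ?thesis
    by (simp add: bounded_clinear_iff bounded_linear_compose[of f g])
qed

lemma bc_diff:
  assumes "bounded_clinear f" "bounded_clinear g"
  shows "bounded_clinear (\<lambda>x. f x - g x)"
proof -
  have "clinear f" "clinear g" "bounded_linear f" "bounded_linear g"
    using assms bounded_clinear_iff by blast+
  moreover have "clinear (\<lambda>x. f x - g x)"
    using calculation unfolding clinear_def by (simp add: algebra_simps scaleC_diff_right)
  ultimately show ?thesis
    by (simp add: bounded_clinear_iff bounded_linear_sub)
qed

lemma bc_add:
  assumes "bounded_clinear f" "bounded_clinear g"
  shows "bounded_clinear (\<lambda>x. f x + g x)"
proof -
  have "clinear f" "clinear g" "bounded_linear f" "bounded_linear g"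
    using assms bounded_clinear_iff by blast+
  moreover have "clinear (\<lambda>x. f x + g x)"
    using calculation unfolding clinear_def by (simp add: algebra_simps scaleC_add_right)
  ultimately show ?thesis
    by (simp add: bounded_clinear_iff bounded_linear_add)
qed

lemma bc_id: "bounded_clinear (\<lambda>x. x)"
  by (simp add: bounded_clinear_iff clinear_def)

lemma bc_zero: "bounded_clinear (\<lambda>x. 0)"
  by (simp add: bounded_clinear_iff clinear_def)

lemma bc_fst: "bounded_clinear fst"
  by (simp add: bounded_clinear_iff clinear_def scaleC_prod_def bounded_linear_fst)

lemma bc_snd: "bounded_clinear snd"
  by (simp add: bounded_clinear_iff clinear_def scaleC_prod_def bounded_linear_snd)

lemma bc_pair:
  assumes "bounded_clinear f" "bounded_clinear g"
  shows "bounded_clinear (\<lambda>x. (f x, g x))"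
proof -
  have "clinear f" "clinear g" "bounded_linear f" "bounded_linear g"
    using assms bounded_clinear_iff by blast+
  moreover have "clinear (\<lambda>x. (f x, g x))"
    using calculation unfolding clinear_def by (simp add: scaleC_prod_def)
  ultimately show ?thesis
    by (simp add: bounded_clinear_iff bounded_linear_Pair)
qed

lemma range_neg: "clinear f \<Longrightarrow> range (\<lambda>x. - f x) = range f"
proof -
  assume f: "clinear f"
  show ?thesis
  proof
    show "range (\<lambda>x. - f x) \<subseteq> range f" using clinear_minus[OF f] by (auto intro: range_eqI[where x="- _"])
    show "range f \<subseteq> range (\<lambda>x. - f x)"
    proof
      fix y assume "y \<in> range f"
      then obtain x where "y = f x" by blast
      then have "y = - f (- x)" using clinear_minus[OF f] by simp
      then show "y \<in> range (\<lambda>x. - f x)" by blast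
    qed
  qed
qed

lemma dim_mod_zero:
  assumes "V \<subseteq> W"
  shows "dim_mod W V = 0"
proof -
  have "dim_mod W V \<le> 0"
    unfolding dim_mod_def
  proof (rule Sup_least)
    fix e assume "e \<in> {enat (card S) |S. S \<subseteq> V \<and> indep_mod W S}"
    then obtain S where e: "e = enat (card S)" and S: "S \<subseteq> V" "indep_mod W S" by blast
    have "S = {}"
    proof (rule ccontr)
      assume "S \<noteq> {}"
      then obtain a where a: "a \<in> S" by blast
      define u where "u = (\<lambda>x::'a. if x = a then (1::complex) else 0)"
      have fin: "finite S" using S(2) unfolding indep_mod_def by blast
      have "(\<Sum>x\<in>S. u x *\<^sub>C x) = (\<Sum>x\<in>S. if x = a then x else 0)"
        by (rule sum.cong) (auto simp: u_def scaleC_one)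
      also have "\<dots> = a" using fin a by (simp add: sum.delta)
      finally have "(\<Sum>x\<in>S. u x *\<^sub>C x) \<in> W" using a S(1) assms by auto
      then have "u a = 0" using S(2) a unfolding indep_mod_def by blast
      then show False by (simp add: u_def)
    qed
    then show "e \<le> 0" using e by (simp add: zero_enat_def)
  qed
  then show ?thesis by simp
qed

lemma dim_mod_pos:
  assumes "v \<notin> W" "v \<in> V" "\<And>c w. w \<in> W \<Longrightarrow> c *\<^sub>C w \<in> W"
  shows "0 < dim_mod W V"
proof -
  have ind: "indep_mod W {v}"
    unfolding indep_mod_def
  proof (intro conjI allI impI ballI)
    show "finite {v}" by simp
    fix u x assume h: "(\<Sum>x\<in>{v}. u x *\<^sub>C x) \<in> W" and x: "x \<in> {v}"
    then have w: "u v *\<^sub>C v \<in> W" by simp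
    show "u x = 0"
    proof (rule ccontr)
      assume "u x \<noteq> 0"
      then have "u v \<noteq> 0" using x by simp
      then have "inverse (u v) *\<^sub>C (u v *\<^sub>C v) = v" by (simp add: scaleC_scaleC scaleC_one)
      then show False using assms(3)[OF w, of "inverse (u v)"] assms(1) by simp
    qed
  qed
  have "enat (card {v}) \<in> {enat (card S) |S. S \<subseteq> V \<and> indep_mod W S}"
    using ind assms(2) by blast
  then have "enat (card {v}) \<le> dim_mod W V" unfolding dim_mod_def by (rule Sup_upper)
  then have "1 \<le> dim_mod W V" by (simp add: one_enat_def)
  moreover have "(0::enat) < 1" by simp
  ultimately show ?thesis by (metis order_less_le_trans)
qed

lemma dim_mod_mono:
  assumes phi: "clinear \<phi>" and z: "0 \<in> W'" and pre: "\<And>w. \<phi> w \<in> W' \<Longrightarrow> w \<in> W"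
    and img: "\<phi> ` V \<subseteq> V'"
  shows "dim_mod W V \<le> dim_mod W' V'"
  unfolding dim_mod_def
proof (rule Sup_mono)
  fix e assume "e \<in> {enat (card S) |S. S \<subseteq> V \<and> indep_mod W S}"
  then obtain S where e: "e = enat (card S)" and S: "S \<subseteq> V" "indep_mod W S" by blast
  have fin: "finite S" using S(2) unfolding indep_mod_def by blast
  have inj: "inj_on \<phi> S"
  proof (rule inj_onI, rule ccontr)
    fix a b assume a: "a \<in> S" and b: "b \<in> S" and eq: "\<phi> a = \<phi> b" and ne: "a \<noteq> b"
    define u where "u = (\<lambda>x. if x = a then (1::complex) else if x = b then -1 else 0)"
    have "(\<Sum>x\<in>S. u x *\<^sub>C x) = (\<Sum>x\<in>S. (if x = a then x else 0) - (if x = b then x else 0))"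
      by (rule sum.cong) (use ne in \<open>auto simp: u_def scaleC_one scaleC_minus_left\<close>)
    also have "\<dots> = a - b" using fin a b by (simp add: sum_subtractf sum.delta)
    finally have "\<phi> (\<Sum>x\<in>S. u x *\<^sub>C x) \<in> W'" using eq z clinear_diff[OF phi] by simp
    then have "(\<Sum>x\<in>S. u x *\<^sub>C x) \<in> W" by (rule pre)
    then have "u a = 0" using S(2) a unfolding indep_mod_def by blast
    then show False by (simp add: u_def)
  qed
  have ind: "indep_mod W' (\<phi> ` S)"
    unfolding indep_mod_def
  proof (intro conjI allI impI ballI)
    show "finite (\<phi> ` S)" using fin by simp
    fix u y assume h: "(\<Sum>y\<in>\<phi> ` S. u y *\<^sub>C y) \<in> W'" and y: "y \<in> \<phi> ` S"
    have "(\<Sum>y\<in>\<phi> ` S. u y *\<^sub>C y) = (\<Sum>x\<in>S. u (\<phi> x) *\<^sub>C \<phi> x)"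
      using sum.reindex[OF inj, of "\<lambda>y. u y *\<^sub>C y"] by simp
    also have "\<dots> = \<phi> (\<Sum>x\<in>S. u (\<phi> x) *\<^sub>C x)"
      by (simp add: clinear_sum[OF phi] clinear_scale[OF phi])
    finally have "(\<Sum>x\<in>S. u (\<phi> x) *\<^sub>C x) \<in> W" using h pre by simp
    moreover have H: "\<forall>v. (\<Sum>x\<in>S. v x *\<^sub>C x) \<in> W \<longrightarrow> (\<forall>x\<in>S. v x = 0)"
      using S(2) unfolding indep_mod_def by blast
    ultimately have "\<forall>x\<in>S. u (\<phi> x) = 0"
      using spec[OF H, of "\<lambda>x. u (\<phi> x)"] by (rule_tac mp)
    then show "u y = 0" using y by blast
  qed
  have mem: "enat (card (\<phi> ` S)) \<in> {enat (card S) |S. S \<subseteq> V' \<and> indep_mod W' S}"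
  proof (rule CollectI, rule exI[of _ "\<phi> ` S"], intro conjI)
    show "enat (card (\<phi> ` S)) = enat (card (\<phi> ` S))" by (rule refl)
    show "\<phi> ` S \<subseteq> V'" using img S(1) by (rule_tac subset_trans[OF image_mono[OF S(1)] img])
    show "indep_mod W' (\<phi> ` S)" by (rule ind)
  qed
  have "card (\<phi> ` S) = card S" using card_image[OF inj] .
  then have "e \<le> enat (card (\<phi> ` S))" using e by simp
  with mem show "\<exists>b\<in>{enat (card S) |S. S \<subseteq> V' \<and> indep_mod W' S}. e \<le> b"
    by (rule bexI[rotated])
qed

theorem mainTheorem16:
  fixes D1 :: "'a::chilbert_space \<Rightarrow> 'a" and D2 :: "'b::chilbert_space \<Rightarrow> 'b"
    and C :: "'b \<Rightarrow> 'a"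
  assumes "cdim (UNIV :: 'a set) = \<infinity>" and "cdim (UNIV :: 'b set) = \<infinity>"
    and "bounded_clinear D1" and "bounded_clinear D2" and "bounded_clinear C"
  shows "spectrum D1 \<union> spectrum D2 =
    spectrum (upper_tri D1 C D2) \<union>
    {l. (0 < defect (\<lambda>x. D1 x - l *\<^sub>C x) \<and>
            defect (\<lambda>x. D1 x - l *\<^sub>C x) \<le> nullity (\<lambda>y. D2 y - l *\<^sub>C y)) \<or>
         (0 < nullity (\<lambda>y. D2 y - l *\<^sub>C y) \<and>
            nullity (\<lambda>y. D2 y - l *\<^sub>C y) \<le> defect (\<lambda>x. D1 x - l *\<^sub>C x))}"
proof (rule set_eqI)
  fix l :: complex
  note bD1 = assms(3) and bD2 = assms(4) and bC = assms(5)
  define T1 where "T1 = (\<lambda>x. l *\<^sub>C x - D1 x)"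
  define T2 where "T2 = (\<lambda>y. l *\<^sub>C y - D2 y)"
  define TM where "TM = (\<lambda>p. l *\<^sub>C p - upper_tri D1 C D2 p)"
  have bT1: "bounded_clinear T1" unfolding T1_def by (rule bc_diff[OF bc_scaleC bD1])
  have bT2: "bounded_clinear T2" unfolding T2_def by (rule bc_diff[OF bc_scaleC bD2])
  have cT1: "clinear T1" and cT2: "clinear T2" and cC: "clinear C"
    using bT1 bT2 bC by (simp_all add: bc_clinear)
  have TM_eq: "TM (x, y) = (T1 x - C y, T2 y)" for x y
    by (simp add: TM_def T1_def T2_def upper_tri_def scaleC_prod_def diff_diff_eq)
  have TM_fun: "TM = (\<lambda>p. (T1 (fst p) - C (snd p), T2 (snd p)))"
  proof
    fix p show "TM p = (T1 (fst p) - C (snd p), T2 (snd p))"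
      using TM_eq[of "fst p" "snd p"] by simp
  qed
  have bTM: "bounded_clinear TM"
    unfolding TM_fun
    by (intro bc_pair bc_diff bc_comp[OF bT1 bc_fst] bc_comp[OF bC bc_snd] bc_comp[OF bT2 bc_snd])
  have sp1: "l \<in> spectrum D1 \<longleftrightarrow> \<not> invertible_op T1" by (simp add: spectrum_def T1_def)
  have sp2: "l \<in> spectrum D2 \<longleftrightarrow> \<not> invertible_op T2" by (simp add: spectrum_def T2_def)
  have spM: "l \<in> spectrum (upper_tri D1 C D2) \<longleftrightarrow> \<not> invertible_op TM" by (simp add: spectrum_def TM_def)
  have fneg: "(\<lambda>x. D1 x - l *\<^sub>C x) = (\<lambda>x. - T1 x)" by (simp add: T1_def)
  have def_eq: "defect (\<lambda>x. D1 x - l *\<^sub>C x) = dim_mod (range T1) UNIV"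
    unfolding defect_def codim_def fneg range_neg[OF cT1] by (rule refl)
  have ker_eq: "{y. D2 y - l *\<^sub>C y = 0} = {y. T2 y = 0}"
    by (auto simp: T2_def)
  have nul_eq: "nullity (\<lambda>y. D2 y - l *\<^sub>C y) = dim_mod {0} {y. T2 y = 0}"
    unfolding nullity_def cdim_def ker_eq by (rule refl)
  define dA where "dA = dim_mod (range T1) UNIV"
  define nB where "nB = dim_mod {0} {y. T2 y = 0}"
  define P where "P = ((0 < dA \<and> dA \<le> nB) \<or> (0 < nB \<and> nB \<le> dA))"
  have goal_eq: "(l \<in> spectrum D1 \<union> spectrum D2) = (\<not> (invertible_op T1 \<and> invertible_op T2))"
    using sp1 sp2 by blast
  have goal_eq2: "(l \<in> spectrum (upper_tri D1 C D2) \<union>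
    {l. (0 < defect (\<lambda>x. D1 x - l *\<^sub>C x) \<and>
            defect (\<lambda>x. D1 x - l *\<^sub>C x) \<le> nullity (\<lambda>y. D2 y - l *\<^sub>C y)) \<or>
         (0 < nullity (\<lambda>y. D2 y - l *\<^sub>C y) \<and>
            nullity (\<lambda>y. D2 y - l *\<^sub>C y) \<le> defect (\<lambda>x. D1 x - l *\<^sub>C x))})
     = (\<not> invertible_op TM \<or> P)"
    by (simp only: Un_iff mem_Collect_eq spM def_eq nul_eq P_def dA_def nB_def)
  have A: "invertible_op TM \<and> \<not> P" if i1: "invertible_op T1" and i2: "invertible_op T2"
  proof -
    obtain S1 where bS1: "bounded_clinear S1" and S1a: "S1 \<circ> T1 = id" and S1b: "T1 \<circ> S1 = id"
      using i1 unfolding invertible_op_def by blast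
    obtain S2 where bS2: "bounded_clinear S2" and S2a: "S2 \<circ> T2 = id" and S2b: "T2 \<circ> S2 = id"
      using i2 unfolding invertible_op_def by blast
    have s1a: "S1 (T1 x) = x" for x using S1a by (metis comp_apply id_apply)
    have s1b: "T1 (S1 x) = x" for x using S1b by (metis comp_apply id_apply)
    have s2a: "S2 (T2 x) = x" for x using S2a by (metis comp_apply id_apply)
    have s2b: "T2 (S2 x) = x" for x using S2b by (metis comp_apply id_apply)
    define SM where "SM = (\<lambda>p. (S1 (fst p + C (S2 (snd p))), S2 (snd p)))"
    have bSM: "bounded_clinear SM"
      unfolding SM_def
      by (intro bc_pair bc_comp[OF bS1] bc_add bc_fst bc_comp[OF bC] bc_comp[OF bS2] bc_snd)
    have "SM \<circ> TM = id"
    proof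
      fix p :: "'a \<times> 'b"
      obtain x y where p: "p = (x, y)" by (cases p)
      show "(SM \<circ> TM) p = id p" by (simp add: p TM_eq SM_def s1a s2a)
    qed
    moreover have "TM \<circ> SM = id"
    proof
      fix p :: "'a \<times> 'b"
      obtain x y where p: "p = (x, y)" by (cases p)
      show "(TM \<circ> SM) p = id p" by (simp add: p TM_eq SM_def s1b s2b)
    qed
    ultimately have "invertible_op TM" using bTM bSM unfolding invertible_op_def by blast
    moreover have "dA = 0" unfolding dA_def
    proof (rule dim_mod_zero)
      show "UNIV \<subseteq> range T1"
      proof
        fix z :: 'a
        have "z = T1 (S1 z)" using s1b by simp
        then show "z \<in> range T1" by (rule range_eqI)
      qed
    qed
    moreover have "nB = 0" unfolding nB_def
    proof (rule dim_mod_zero)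
      show "{y. T2 y = 0} \<subseteq> {0}"
      proof
        fix y assume "y \<in> {y. T2 y = 0}"
        then have "T2 y = 0" by simp
        then have "y = S2 0" using s2a[of y] by simp
        also have "\<dots> = 0" by (rule clinear_0[OF bc_clinear[OF bS2]])
        finally show "y \<in> {0}" by simp
      qed
    qed
    ultimately show ?thesis unfolding P_def by simp
  qed
  have B: "P" if iM: "invertible_op TM" and ni: "\<not> (invertible_op T1 \<and> invertible_op T2)"
  proof -
    obtain S where bS: "bounded_clinear S" and Sa: "S \<circ> TM = id" and Sb: "TM \<circ> S = id"
      using iM unfolding invertible_op_def by blast
    have sa: "S (TM p) = p" for p using Sa by (metis comp_apply id_apply)
    have sb: "TM (S p) = p" for p using Sb by (metis comp_apply id_apply)
    have C0: "C 0 = 0" by (rule clinear_0[OF cC])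
    have T20: "T2 0 = 0" by (rule clinear_0[OF cT2])
    have T10: "T1 0 = 0" by (rule clinear_0[OF cT1])
    have TMx0: "TM (x, 0) = (T1 x, 0)" for x by (simp add: TM_eq C0 T20)
    have bin: "bounded_clinear (\<lambda>z::'a. (z, 0::'b))" by (rule bc_pair[OF bc_id bc_zero])
    have bin2: "bounded_clinear (\<lambda>z::'b. (0::'a, z))" by (rule bc_pair[OF bc_zero bc_id])
    have sndS: "T2 (snd (S p)) = snd p" for p
    proof -
      have "snd (TM (S p)) = T2 (snd (S p))" by (simp add: TM_fun)
      then show ?thesis using sb[of p] by simp
    qed
    have fstS: "T1 (fst (S p)) - C (snd (S p)) = fst p" for p
    proof -
      have "fst (TM (S p)) = T1 (fst (S p)) - C (snd (S p))" by (simp add: TM_fun)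
      then show ?thesis using sb[of p] by simp
    qed
    have nsurj: "\<not> (\<forall>z. \<exists>w. z = T1 w)"
    proof
      assume surj1: "\<forall>z. \<exists>w. z = T1 w"
      define S1 where "S1 = (\<lambda>z. fst (S (z, 0::'b)))"
      have bS1: "bounded_clinear S1" unfolding S1_def by (rule bc_comp[OF bc_fst bc_comp[OF bS bin]])
      have s1a: "S1 (T1 x) = x" for x unfolding S1_def using sa[of "(x,0)"] by (simp add: TMx0)
      have s1b: "T1 (S1 z) = z" for z
      proof -
        obtain w where "z = T1 w" using surj1 by blast
        then show ?thesis using s1a by simp
      qed
      have i1: "invertible_op T1" unfolding invertible_op_def
        using bT1 bS1 s1a s1b by (intro conjI exI[of _ S1]) (auto simp: fun_eq_iff)
      have inj2: "y = 0" if "T2 y = 0" for y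
      proof -
        have "TM (S1 (C y), y) = (0, 0)" by (simp add: TM_eq s1b that)
        also have "\<dots> = TM (0, 0)" by (simp add: TM_eq T10 T20 C0)
        finally have "S (TM (S1 (C y), y)) = S (TM (0,0))" by simp
        then show "y = 0" by (simp add: sa)
      qed
      define S2 where "S2 = (\<lambda>z. snd (S (0::'a, z)))"
      have bS2: "bounded_clinear S2" unfolding S2_def by (rule bc_comp[OF bc_snd bc_comp[OF bS bin2]])
      have s2b: "T2 (S2 z) = z" for z unfolding S2_def using sndS[of "(0,z)"] by simp
      have s2a: "S2 (T2 y) = y" for y
      proof -
        have "T2 (S2 (T2 y) - y) = 0" by (simp add: clinear_diff[OF cT2] s2b)
        then have "S2 (T2 y) - y = 0" by (rule inj2)
        then show ?thesis by simp
      qed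
      have i2: "invertible_op T2" unfolding invertible_op_def
        using bT2 bS2 s2a s2b by (intro conjI exI[of _ S2]) (auto simp: fun_eq_iff)
      show False using ni i1 i2 by blast
    qed
    then obtain v where v: "v \<notin> range T1" by blast
    have "0 < dA" unfolding dA_def
    proof (rule dim_mod_pos[OF v])
      show "v \<in> UNIV" by simp
      fix c w assume "w \<in> range T1"
      then obtain x where "w = T1 x" by blast
      then have "c *\<^sub>C w = T1 (c *\<^sub>C x)" by (simp add: clinear_scale[OF cT1])
      then show "c *\<^sub>C w \<in> range T1" by blast
    qed
    moreover have "dA \<le> nB" unfolding dA_def nB_def
    proof (rule dim_mod_mono[where \<phi> = "\<lambda>v. snd (S (v, 0::'b))"])
      show "clinear (\<lambda>v. snd (S (v, 0::'b)))"
        by (rule bc_clinear, rule bc_comp[OF bc_snd bc_comp[OF bS bin]])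
      show "(0::'b) \<in> {0}" by simp
      show "(\<lambda>v. snd (S (v, 0::'b))) ` UNIV \<subseteq> {y. T2 y = 0}"
        using sndS by auto
      fix w assume "snd (S (w, 0::'b)) \<in> {0}"
      then have "snd (S (w, 0::'b)) = 0" by simp
      then have "T1 (fst (S (w, 0::'b))) = w" using fstS[of "(w, 0)"] C0 by simp
      then show "w \<in> range T1" by (metis rangeI)
    qed
    ultimately show ?thesis unfolding P_def by blast
  qed
  show "(l \<in> spectrum D1 \<union> spectrum D2) = (l \<in> spectrum (upper_tri D1 C D2) \<union>
    {l. (0 < defect (\<lambda>x. D1 x - l *\<^sub>C x) \<and>
            defect (\<lambda>x. D1 x - l *\<^sub>C x) \<le> nullity (\<lambda>y. D2 y - l *\<^sub>C y)) \<or>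
         (0 < nullity (\<lambda>y. D2 y - l *\<^sub>C y) \<and>
            nullity (\<lambda>y. D2 y - l *\<^sub>C y) \<le> defect (\<lambda>x. D1 x - l *\<^sub>C x))})"
    unfolding goal_eq goal_eq2 using A B by blast
qed

end
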